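(* Let $\mathcal{A}\subseteq M_n(\mathbb{C})$ be a logmodular subalgebra. Then for every positive semidefinite matrix $b\in M_n(\mathbb{C})$ there exist $a,c\in\mathcal{A}$ such that $b=a^*a=cc^*$.
   Context: A unital subalgebra $\mathcal{A}\subseteq M_n(\mathbb{C})$ (containing the identity $1_n$) is called logmodular (in $M_n(\mathbb{C})$) if the set $\{a^*a : a\in\mathcal{A}^{-1}\}$ is dense in the set of positive invertible matrices in $M_n(\mathbb{C})$, where $\mathcal{A}^{-1}$ denotes the set of elements of $\mathcal{A}$ invertible in $\mathcal{A}$. *)

theory Defs
  imports "HOL-Analysis.Analysis"
begin

text \<open>Complex n x n matrices are represented as complex^'n^'n (dimension n = CARD('n)).\<close>

definition adjoint_mat :: "complex^'n^'n \<Rightarrow> complex^'n^'n" where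
  "adjoint_mat A = (\<chi> i j. cnj (A $ j $ i))"

definition unital_subalgebra :: "(complex^'n^'n) set \<Rightarrow> bool" where
  "unital_subalgebra S \<longleftrightarrow>
     mat 1 \<in> S \<and> 0 \<in> S \<and>
     (\<forall>a\<in>S. \<forall>b\<in>S. a + b \<in> S) \<and>
     (\<forall>a\<in>S. \<forall>b\<in>S. a ** b \<in> S) \<and>
     (\<forall>c::complex. \<forall>a\<in>S. (\<chi> i j. c * a $ i $ j) \<in> S)"

definition invertibles_in :: "(complex^'n^'n) set \<Rightarrow> (complex^'n^'n) set" where
  "invertibles_in S = {a \<in> S. \<exists>b\<in>S. a ** b = mat 1 \<and> b ** a = mat 1}"

definition psd_mat :: "complex^'n^'n \<Rightarrow> bool" where
  "psd_mat A \<longleftrightarrow> adjoint_mat A = A \<and>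
     (\<forall>x::complex^'n. let q = (\<Sum>i\<in>UNIV. cnj (x $ i) * (A *v x) $ i) in Im q = 0 \<and> Re q \<ge> 0)"

definition pos_invertible_mats :: "(complex^'n^'n) set" where
  "pos_invertible_mats = {A. psd_mat A \<and> invertible A}"

definition logmodular :: "(complex^'n^'n) set \<Rightarrow> bool" where
  "logmodular S \<longleftrightarrow> unital_subalgebra S \<and>
     pos_invertible_mats \<subseteq> closure {adjoint_mat a ** a | a. a \<in> invertibles_in S}"

end

theory Submission
  imports Defs
begin


lemma adj_adj[simp]: "adjoint_mat (adjoint_mat A) = A"
  by (simp add: adjoint_mat_def vec_eq_iff)

lemma adj_mult: "adjoint_mat (A ** B) = adjoint_mat B ** adjoint_mat A"
  by (simp add: adjoint_mat_def matrix_matrix_mult_def vec_eq_iff mult.commute)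

lemma adj_id[simp]: "adjoint_mat (mat 1) = mat 1"
  by (simp add: adjoint_mat_def mat_def vec_eq_iff)

lemma norm_vec_sq: "norm (x::'a::real_normed_vector^'n)^2 = (\<Sum>i\<in>UNIV. norm (x$i)^2)"
  unfolding norm_vec_def L2_set_def by (simp add: sum_nonneg)

lemma contF: "continuous_on UNIV (\<lambda>a::complex^'n^'n. adjoint_mat a ** a)"
  unfolding adjoint_mat_def matrix_matrix_mult_def
  by (intro continuous_intros)

lemma contG: "continuous_on UNIV (\<lambda>a::complex^'n^'n. a ** adjoint_mat a)"
  unfolding adjoint_mat_def matrix_matrix_mult_def
  by (intro continuous_intros)

lemma scaleR_mat: "(scaleR (c::real) (a :: complex^'n^'n)) = (\<chi> i j. complex_of_real c * a $ i $ j)"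
  unfolding vec_eq_iff by (simp add: scaleR_conv_of_real[where 'a=complex])

lemma subspaceS: assumes "unital_subalgebra S" shows "subspace S"
  using assms unfolding unital_subalgebra_def subspace_def scaleR_mat by blast

lemma closedS: assumes "unital_subalgebra S" shows "closed S"
  by (rule closed_subspace[OF subspaceS[OF assms]])



lemma diagF: "(adjoint_mat a ** a) $ j $ j = complex_of_real (\<Sum>k\<in>UNIV. norm (a$k$j)^2)"
  unfolding adjoint_mat_def matrix_matrix_mult_def of_real_sum complex_norm_square
  by (simp add: mult.commute)

lemma diagG: "(a ** adjoint_mat a) $ j $ j = complex_of_real (norm (a$j)^2)"
  unfolding adjoint_mat_def matrix_matrix_mult_def norm_vec_sq of_real_sum complex_norm_square
  by (simp add: mult.commute)

lemma diag_le: "norm ((M::complex^'n^'n) $ j $ j) \<le> norm M"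
proof -
  have "norm (M$j$j) \<le> norm (M$j)" by (rule Finite_Cartesian_Product.norm_nth_le)
  also have "\<dots> \<le> norm M" by (rule Finite_Cartesian_Product.norm_nth_le)
  finally show ?thesis .
qed

lemma boundF: "norm (a::complex^'n^'n)^2 \<le> real CARD('n) * norm (adjoint_mat a ** a)"
proof -
  have "norm a^2 = (\<Sum>k\<in>UNIV. \<Sum>j\<in>UNIV. norm (a$k$j)^2)"
    by (simp add: norm_vec_sq abs_of_nonneg sum_nonneg)
  also have "\<dots> = (\<Sum>j\<in>UNIV. \<Sum>k\<in>UNIV. norm (a$k$j)^2)"
    by (rule sum.swap)
  also have "\<dots> = (\<Sum>j\<in>UNIV. norm ((adjoint_mat a ** a) $ j $ j))"
    by (simp only: diagF norm_of_real) (simp add: sum_nonneg)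
  also have "\<dots> \<le> (\<Sum>j\<in>(UNIV::'n set). norm (adjoint_mat a ** a))"
    by (intro sum_mono diag_le)
  finally show ?thesis by simp
qed

lemma boundG: "norm (a::complex^'n^'n)^2 \<le> real CARD('n) * norm (a ** adjoint_mat a)"
proof -
  have "norm a^2 = (\<Sum>j\<in>UNIV. norm ((a ** adjoint_mat a) $ j $ j))"
    by (simp only: diagG norm_of_real) (simp add: norm_vec_sq abs_of_nonneg sum_nonneg)
  also have "\<dots> \<le> (\<Sum>j\<in>(UNIV::'n set). norm (a ** adjoint_mat a))"
    by (intro sum_mono diag_le)
  finally show ?thesis by simp
qed

lemma closure_image_aux:
  fixes f :: "'a::euclidean_space \<Rightarrow> 'b::real_normed_vector"
  assumes S: "closed S" and C: "C \<ge> 0" and f: "continuous_on UNIV f"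
    and bd: "\<And>x. x \<in> S \<Longrightarrow> norm x ^ 2 \<le> C * norm (f x)"
    and y: "y \<in> closure (f ` S)"
  shows "y \<in> f ` S"
proof -
  define R where "R = sqrt (C * (norm y + 1))"
  define K where "K = S \<inter> cball 0 R"
  have "compact K" unfolding K_def using S by (simp add: closed_Int_compact)
  then have cK: "compact (f ` K)"
    by (meson compact_continuous_image continuous_on_subset f subset_UNIV)
  have sub: "ball y 1 \<inter> f ` S \<subseteq> f ` K"
  proof
    fix z assume "z \<in> ball y 1 \<inter> f ` S"
    then obtain x where x: "x \<in> S" "z = f x" "dist y (f x) < 1" by auto
    have "norm (f x) \<le> norm y + 1"
      using x(3) norm_triangle_ineq2[of "f x" y] by (simp add: dist_norm norm_minus_commute)
    have "C * norm (f x) \<le> C * (norm y + 1)"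
      using \<open>norm (f x) \<le> norm y + 1\<close> C by (rule mult_left_mono)
    then have "norm x ^ 2 \<le> C * (norm y + 1)"
      using bd[OF x(1)] by linarith
    then have "norm x \<le> R" unfolding R_def by (rule real_le_rsqrt)
    then show "z \<in> f ` K" using x unfolding K_def by auto
  qed
  have "y \<in> ball y 1 \<inter> closure (f ` S)" using y by simp
  also have "\<dots> \<subseteq> closure (ball y 1 \<inter> f ` S)" by (rule open_Int_closure_subset) simp
  also have "\<dots> \<subseteq> closure (f ` K)" using sub by (rule closure_mono)
  also have "\<dots> = f ` K" using cK by (simp add: compact_imp_closed closure_closed)
  also have "\<dots> \<subseteq> f ` S" unfolding K_def by auto
  finally show ?thesis .
qed



definition qf :: "complex^'n^'n \<Rightarrow> complex^'n \<Rightarrow> complex" where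
  "qf A x = (\<Sum>i\<in>UNIV. cnj (x$i) * (A *v x)$i)"

lemma psd_iff: "psd_mat A \<longleftrightarrow> adjoint_mat A = A \<and> (\<forall>x. Im (qf A x) = 0 \<and> Re (qf A x) \<ge> 0)"
  by (simp add: psd_mat_def qf_def Let_def)

lemma herm: "adjoint_mat A = A \<Longrightarrow> cnj (A$j$i) = A$i$j"
  by (metis adjoint_mat_def vec_lambda_beta)

lemma scaleR_mv: "(scaleR r (M::complex^'n^'n)) *v x = scaleR r (M *v x)"
  unfolding vec_eq_iff matrix_vector_mult_def
  by (simp add: scaleR_conv_of_real[where 'a=complex] sum_distrib_left mult.assoc)

lemma shift_mv: "(((b::complex^'n^'n) + scaleR r (mat 1)) *v x) $ i = (b *v x)$i + of_real r * x$i"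
proof -
  have "(b + scaleR r (mat 1)) *v x = b *v x + scaleR r (mat 1 *v x)"
    unfolding matrix_vector_mult_add_rdistrib scaleR_mv ..
  then show ?thesis by (simp add: scaleR_conv_of_real[where 'a=complex])
qed

lemma qf_shift: "qf (b + scaleR r (mat 1)) x = qf b x + of_real (r * (\<Sum>i\<in>UNIV. norm (x$i)^2))"
proof -
  have "qf (b + scaleR r (mat 1)) x = qf b x + (\<Sum>i\<in>UNIV. of_real r * (x$i * cnj (x$i)))"
    unfolding qf_def shift_mv by (simp add: distrib_left sum.distrib algebra_simps)
  also have "(\<Sum>i\<in>UNIV. of_real r * (x$i * cnj (x$i))) = of_real (r * (\<Sum>i\<in>UNIV. norm (x$i)^2))"
    unfolding of_real_mult of_real_sum complex_norm_square sum_distrib_left ..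
  finally show ?thesis .
qed

lemma pos_shift:
  assumes b: "psd_mat b" and r: "r > 0"
  shows "b + scaleR r (mat 1) \<in> pos_invertible_mats"
proof -
  let ?E = "b + scaleR r (mat 1)"
  have hb: "adjoint_mat b = b" and qb: "\<And>x. Im (qf b x) = 0 \<and> Re (qf b x) \<ge> 0"
    using b by (auto simp: psd_iff)
  have "adjoint_mat ?E = ?E"
    unfolding vec_eq_iff using herm[OF hb]
    by (auto simp: adjoint_mat_def mat_def scaleR_mat)
  moreover have "Im (qf ?E x) = 0 \<and> Re (qf ?E x) \<ge> 0" for x
    using qb[of x] r by (simp add: qf_shift sum_nonneg)
  moreover have "invertible ?E"
    unfolding invertible_left_inverse matrix_left_invertible_ker
  proof (intro allI impI)
    fix x assume "?E *v x = 0"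
    then have "qf ?E x = 0" by (simp add: qf_def)
    then have "Re (qf b x) + r * (\<Sum>i\<in>UNIV. norm (x$i)^2) = 0"
      unfolding qf_shift by (metis Re_complex_of_real plus_complex.sel(1) zero_complex.sel(1))
    moreover have "r * (\<Sum>i\<in>UNIV. norm (x$i)^2) \<ge> 0"
      using r by (simp add: sum_nonneg)
    ultimately have "r * (\<Sum>i\<in>UNIV. norm (x$i)^2) = 0"
      using qb[of x] by linarith
    then have "(\<Sum>i\<in>UNIV. norm (x$i)^2) = 0" using r by simp
    then have "\<forall>i\<in>UNIV. norm (x$i)^2 = 0" by (subst (asm) sum_nonneg_eq_0_iff) auto
    then show "x = 0" by (simp add: vec_eq_iff)
  qed
  ultimately show ?thesis by (auto simp: pos_invertible_mats_def psd_iff)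
qed

lemma inv_pos:
  assumes b: "b \<in> pos_invertible_mats" and Bb: "B ** b = mat 1" and bB: "b ** B = mat 1"
  shows "B \<in> pos_invertible_mats"
proof -
  have hb: "adjoint_mat b = b" and qb: "\<And>x. Im (qf b x) = 0 \<and> Re (qf b x) \<ge> 0"
    using b by (auto simp: psd_iff pos_invertible_mats_def)
  have "invertible B" unfolding invertible_def using Bb bB by blast
  moreover have "adjoint_mat B = B"
  proof -
    have "adjoint_mat B ** b = mat 1"
      by (metis adj_mult adj_id bB hb)
    then have "adjoint_mat B = adjoint_mat B ** (b ** B)" using bB by simp
    also have "\<dots> = B" by (simp add: matrix_mul_assoc \<open>adjoint_mat B ** b = mat 1\<close>)
    finally show ?thesis .
  qed
  moreover have "Im (qf B x) = 0 \<and> Re (qf B x) \<ge> 0" for x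
  proof -
    define y where "y = B *v x"
    have x: "x = b *v y" unfolding y_def matrix_vector_mul_assoc bB by simp
    have "qf B x = (\<Sum>i\<in>UNIV. cnj (x$i) * y$i)" by (simp add: qf_def y_def)
    also have "\<dots> = (\<Sum>i\<in>UNIV. cnj ((b *v y)$i) * y$i)" using x by simp
    also have "\<dots> = cnj (qf b y)" by (simp add: qf_def mult.commute)
    finally have "qf B x = cnj (qf b y)" .
    then show ?thesis using qb[of y] by simp
  qed
  ultimately show ?thesis by (auto simp: pos_invertible_mats_def psd_iff)
qed



lemma inv_in_S:
  fixes S :: "(complex^'n^'n) set" and a a' :: "complex^'n^'n"
  assumes S: "unital_subalgebra S" and a: "a \<in> S" and a': "a' ** a = mat 1"
  shows "\<exists>c\<in>S. a ** c = mat 1 \<and> c ** a = mat 1"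
proof -
  have sS: "subspace S" by (rule subspaceS[OF S])
  define h where "h = (\<lambda>x::complex^'n^'n. a ** x)"
  have lin: "linear h"
    unfolding h_def
    by (rule linearI) (simp_all add: matrix_add_ldistrib vec_eq_iff matrix_matrix_mult_def
        scaleR_conv_of_real[where 'a=complex] sum_distrib_left mult.left_commute distrib_left sum.distrib)
  have inj: "inj_on h (span S)"
    unfolding h_def by (rule inj_onI) (metis a' matrix_mul_assoc matrix_mul_lid)
  have sub: "h ` S \<subseteq> S" using S a unfolding h_def unital_subalgebra_def by auto
  have "dim (h ` S) = dim S" by (rule dim_image_eq[OF lin inj])
  then have "h ` S = S"
    using subspace_dim_equal[OF linear_subspace_image[OF lin sS] sS sub] by simp
  moreover have "mat 1 \<in> S" using S unfolding unital_subalgebra_def by auto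
  ultimately obtain c where c: "c \<in> S" "a ** c = mat 1" unfolding h_def by force
  then show ?thesis using matrix_left_right_inverse by blast
qed



theorem mainTheorem1:
  fixes S :: "(complex^'n^'n) set" and b :: "complex^'n^'n"
  assumes "logmodular S"
    and "psd_mat b"
  shows "\<exists>a\<in>S. \<exists>c\<in>S. b = adjoint_mat a ** a \<and> b = c ** adjoint_mat c"
proof -
  have sub: "unital_subalgebra S"
    and cl: "pos_invertible_mats \<subseteq> closure {adjoint_mat a ** a | a. a \<in> invertibles_in S}"
    using assms(1) unfolding logmodular_def by auto
  let ?F = "\<lambda>a::complex^'n^'n. adjoint_mat a ** a"
  let ?G = "\<lambda>a::complex^'n^'n. a ** adjoint_mat a"
  have cS: "closed S" by (rule closedS[OF sub])
  have C: "real CARD('n) \<ge> 0" by simp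
  have clF: "y \<in> ?F ` S" if "y \<in> closure (?F ` S)" for y
    using closure_image_aux[OF cS C contF _ that] boundF by blast
  have clG: "y \<in> ?G ` S" if "y \<in> closure (?G ` S)" for y
    using closure_image_aux[OF cS C contG _ that] boundG by blast
  have "{adjoint_mat a ** a | a. a \<in> invertibles_in S} \<subseteq> ?F ` S"
    unfolding invertibles_in_def by auto
  then have "closure {adjoint_mat a ** a | a. a \<in> invertibles_in S} \<subseteq> closure (?F ` S)"
    by (rule closure_mono)
  then have posF: "pos_invertible_mats \<subseteq> ?F ` S" using cl clF by blast
  have posG: "pos_invertible_mats \<subseteq> ?G ` S"
  proof
    fix p :: "complex^'n^'n" assume p: "p \<in> pos_invertible_mats"
    then obtain B :: "complex^'n^'n" where Bp: "B ** p = mat 1" and pB: "p ** B = mat 1"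
      unfolding pos_invertible_mats_def invertible_def by blast
    have "B \<in> pos_invertible_mats" by (rule inv_pos[OF p Bp pB])
    then obtain a where a: "a \<in> S" "B = adjoint_mat a ** a" using posF by blast
    have "(p ** adjoint_mat a) ** a = mat 1" using pB a(2) by (simp add: matrix_mul_assoc)
    then obtain c where c: "c \<in> S" "a ** c = mat 1" "c ** a = mat 1"
      using inv_in_S[OF sub a(1)] by blast
    have "B ** ?G c = adjoint_mat a ** (a ** c) ** adjoint_mat c"
      using a(2) by (simp add: matrix_mul_assoc)
    also have "\<dots> = adjoint_mat (c ** a)" using c(2) by (simp add: adj_mult)
    also have "\<dots> = mat 1" using c(3) by simp
    finally have "B ** ?G c = mat 1" .
    then have "?G c = p"
      by (metis Bp matrix_left_right_inverse matrix_mul_assoc matrix_mul_lid)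
    then show "p \<in> ?G ` S" using c(1) by blast
  qed
  define E where "E = (\<lambda>k::nat. b + scaleR (inverse (real (Suc k))) (mat 1))"
  have EP: "E k \<in> pos_invertible_mats" for k
    unfolding E_def by (rule pos_shift[OF assms(2)]) simp
  have "E \<longlonglongrightarrow> b + scaleR 0 (mat 1)"
    unfolding E_def
    by (intro tendsto_add tendsto_const tendsto_scaleR LIMSEQ_inverse_real_of_nat)
  then have Elim: "E \<longlonglongrightarrow> b" by simp
  have "b \<in> closure (?F ` S)"
    unfolding closure_sequential using EP posF Elim by blast
  then obtain a where a: "a \<in> S" "b = ?F a" using clF by blast
  have "b \<in> closure (?G ` S)"
    unfolding closure_sequential using EP posG Elim by blast
  then obtain c where c: "c \<in> S" "b = ?G c" using clG by blast
  show ?thesis using a c by blast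
qed


end
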